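(* Let $\bar A_t=\frac1{t+1}\sum_{k=0}^tr_k$ be the running average of the observed rewards, $\hat V_t=\bar A_t/(1-\gamma)$, and $\bar V=\pi^TV$ the mean of the true value function. Let $t_0$ be the largest integer satisfying $t_0\le2\tau^{\rm mix}\big(\frac1{2(t_0+1)}\big)$. Then for all $t>t_0$, $$E\big[(\hat V_t-\bar V)^2\big]\le O\!\left(\frac{r_{\max}^2\,\tau^{\rm mix}\big(\frac1{2(t+1)}\big)}{(1-\gamma)^2\,t}\right),$$ where the implied constant is absolute.
   Context: Setting: finite state space $\mathcal S=[n]$, finite action set, fixed policy $\mu$ inducing an irreducible aperiodic transition matrix $P$ with stationary distribution $\pi$; rewards deterministic with $|r(s,a,s')|\le r_{\max}$; discount $\gamma\in(0,1)$. The true value function $V\in\mathbb{R}^n$ is $V(s)=E_{\mu,s}[\sum_{t\ge0}\gamma^tr_{t+1}]$, equivalently $V=(I-\gamma P)^{-1}R$ with $R(s)=\sum_{s'}\sum_a\mu(s,a)P(s'|s,a)r(s,a,s')$. Mixing: there are $m>0$, $\rho\in(0,1)$ with $\sup_sd_{TV}(P^t(s,\cdot),\pi)\le m\rho^t$ for all $t\ge0$; $\tau^{\rm mix}(\epsilon)=\min\{t\in\mathbb N,t\ge1:m\rho^t\le\epsilon\}$. Observations: a single trajectory with $s_0\sim\pi$, $a_t\sim\mu(s_t,\cdot)$, $s_{t+1}$ from the MDP transition, $r_t=r(s_t,a_t,s_{t+1})$. *)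

theory Defs
  imports "HOL-Analysis.Analysis"
begin

(* States are {..<n} (i.e. [n] shifted to start at 0), actions are {..<na}.
   All functions are only meaningful on these index ranges. *)

definition stoch_policy :: "nat \<Rightarrow> nat \<Rightarrow> (nat \<Rightarrow> nat \<Rightarrow> real) \<Rightarrow> bool" where
  "stoch_policy n na \<mu> \<longleftrightarrow>
     (\<forall>s<n. (\<forall>a<na. \<mu> s a \<ge> 0) \<and> (\<Sum>a<na. \<mu> s a) = 1)"

definition trans_kernel :: "nat \<Rightarrow> nat \<Rightarrow> (nat \<Rightarrow> nat \<Rightarrow> nat \<Rightarrow> real) \<Rightarrow> bool" where
  "trans_kernel n na Pk \<longleftrightarrow>
     (\<forall>s<n. \<forall>a<na. (\<forall>s'<n. Pk s a s' \<ge> 0) \<and> (\<Sum>s'<n. Pk s a s') = 1)"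

definition induced_P :: "nat \<Rightarrow> (nat \<Rightarrow> nat \<Rightarrow> real) \<Rightarrow> (nat \<Rightarrow> nat \<Rightarrow> nat \<Rightarrow> real) \<Rightarrow> nat \<Rightarrow> nat \<Rightarrow> real" where
  "induced_P na \<mu> Pk s s' = (\<Sum>a<na. \<mu> s a * Pk s a s')"

fun Ppow :: "nat \<Rightarrow> (nat \<Rightarrow> nat \<Rightarrow> real) \<Rightarrow> nat \<Rightarrow> nat \<Rightarrow> nat \<Rightarrow> real" where
  "Ppow n P 0 i j = (if i = j then 1 else 0)"
| "Ppow n P (Suc k) i j = (\<Sum>u<n. Ppow n P k i u * P u j)"

definition irreducible_chain :: "nat \<Rightarrow> (nat \<Rightarrow> nat \<Rightarrow> real) \<Rightarrow> bool" where
  "irreducible_chain n P \<longleftrightarrow> (\<forall>i<n. \<forall>j<n. \<exists>k. Ppow n P k i j > 0)"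

definition aperiodic_chain :: "nat \<Rightarrow> (nat \<Rightarrow> nat \<Rightarrow> real) \<Rightarrow> bool" where
  "aperiodic_chain n P \<longleftrightarrow> (\<forall>i<n. Gcd {k::nat. k \<ge> 1 \<and> Ppow n P k i i > 0} = 1)"

definition stationary_dist :: "nat \<Rightarrow> (nat \<Rightarrow> nat \<Rightarrow> real) \<Rightarrow> (nat \<Rightarrow> real) \<Rightarrow> bool" where
  "stationary_dist n P \<pi> \<longleftrightarrow>
     (\<forall>j<n. \<pi> j \<ge> 0) \<and> (\<Sum>j<n. \<pi> j) = 1 \<and> (\<forall>j<n. (\<Sum>i<n. \<pi> i * P i j) = \<pi> j)"

definition tv_dist :: "nat \<Rightarrow> (nat \<Rightarrow> real) \<Rightarrow> (nat \<Rightarrow> real) \<Rightarrow> real" where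
  "tv_dist n p q = (1/2) * (\<Sum>j<n. \<bar>p j - q j\<bar>)"

definition tau_mix :: "real \<Rightarrow> real \<Rightarrow> real \<Rightarrow> nat" where
  "tau_mix m \<rho> \<epsilon> = (LEAST t::nat. t \<ge> 1 \<and> m * \<rho> ^ t \<le> \<epsilon>)"

definition t0_mix :: "real \<Rightarrow> real \<Rightarrow> nat" where
  "t0_mix m \<rho> = (GREATEST t::nat. real t \<le> 2 * real (tau_mix m \<rho> (1 / (2 * (real t + 1)))))"

definition exp_reward :: "nat \<Rightarrow> nat \<Rightarrow> (nat \<Rightarrow> nat \<Rightarrow> real) \<Rightarrow> (nat \<Rightarrow> nat \<Rightarrow> nat \<Rightarrow> real)
    \<Rightarrow> (nat \<Rightarrow> nat \<Rightarrow> nat \<Rightarrow> real) \<Rightarrow> nat \<Rightarrow> real" where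
  "exp_reward n na \<mu> Pk r s = (\<Sum>s'<n. \<Sum>a<na. \<mu> s a * Pk s a s' * r s a s')"

(* V(s) = E_{mu,s}[ sum_t gamma^t r_{t+1} ] = sum_k gamma^k (P^k R)(s) *)
definition value_fn :: "nat \<Rightarrow> nat \<Rightarrow> (nat \<Rightarrow> nat \<Rightarrow> real) \<Rightarrow> (nat \<Rightarrow> nat \<Rightarrow> nat \<Rightarrow> real)
    \<Rightarrow> (nat \<Rightarrow> nat \<Rightarrow> nat \<Rightarrow> real) \<Rightarrow> real \<Rightarrow> nat \<Rightarrow> real" where
  "value_fn n na \<mu> Pk r \<gamma> s =
     (\<Sum>k. \<gamma> ^ k * (\<Sum>s'<n. Ppow n (induced_P na \<mu> Pk) k s s' * exp_reward n na \<mu> Pk r s'))"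

(* probability of the trajectory prefix s_0 a_0 s_1 ... a_t s_{t+1}
   (ss = [s_0,...,s_{t+1}], as = [a_0,...,a_t]) with s_0 ~ pi *)
definition traj_weight :: "(nat \<Rightarrow> real) \<Rightarrow> (nat \<Rightarrow> nat \<Rightarrow> real) \<Rightarrow> (nat \<Rightarrow> nat \<Rightarrow> nat \<Rightarrow> real)
    \<Rightarrow> nat \<Rightarrow> nat list \<Rightarrow> nat list \<Rightarrow> real" where
  "traj_weight \<pi> \<mu> Pk t ss as =
     \<pi> (ss ! 0) * (\<Prod>k<t+1. \<mu> (ss ! k) (as ! k) * Pk (ss ! k) (as ! k) (ss ! (k+1)))"

definition traj_expect :: "nat \<Rightarrow> nat \<Rightarrow> (nat \<Rightarrow> real) \<Rightarrow> (nat \<Rightarrow> nat \<Rightarrow> real) \<Rightarrow> (nat \<Rightarrow> nat \<Rightarrow> nat \<Rightarrow> real)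
    \<Rightarrow> nat \<Rightarrow> (nat list \<Rightarrow> nat list \<Rightarrow> real) \<Rightarrow> real" where
  "traj_expect n na \<pi> \<mu> Pk t f =
     (\<Sum>(ss, as) \<in> {ss. length ss = t + 2 \<and> set ss \<subseteq> {..<n}} \<times> {as. length as = t + 1 \<and> set as \<subseteq> {..<na}}.
        traj_weight \<pi> \<mu> Pk t ss as * f ss as)"

definition avg_reward :: "(nat \<Rightarrow> nat \<Rightarrow> nat \<Rightarrow> real) \<Rightarrow> nat \<Rightarrow> nat list \<Rightarrow> nat list \<Rightarrow> real" where
  "avg_reward r t ss as = (1 / (real t + 1)) * (\<Sum>k\<le>t. r (ss ! k) (as ! k) (ss ! (k+1)))"

end

theory Submission
  imports Defs
begin

lemma sum_lists_snoc:
  assumes "finite A"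
  shows "(\<Sum>xs\<in>{xs. length xs = Suc k \<and> set xs \<subseteq> A}. f xs)
       = (\<Sum>xs\<in>{xs. length xs = k \<and> set xs \<subseteq> A}. \<Sum>x\<in>A. f (xs@[x]))"
proof -
  let ?L = "{xs. length xs = k \<and> set xs \<subseteq> A}"
  let ?g = "\<lambda>p::'a list \<times> 'a. fst p @ [snd p]"
  have fin: "finite ?L" using finite_lists_length_eq[OF assms, of k] by (simp add: conj_commute)
  have "(\<Sum>xs\<in>?L. \<Sum>x\<in>A. f (xs@[x])) = (\<Sum>p\<in>?L \<times> A. f (?g p))"
    by (simp add: sum.cartesian_product case_prod_beta)
  also have "\<dots> = (\<Sum>xs\<in>?g ` (?L \<times> A). f xs)"
    by (rule sum.reindex[symmetric, unfolded comp_def]) (auto simp: inj_on_def)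
  also have "?g ` (?L \<times> A) = {xs. length xs = Suc k \<and> set xs \<subseteq> A}"
  proof (rule set_eqI, rule iffI)
    fix xs assume "xs \<in> ?g ` (?L \<times> A)" then show "xs \<in> {xs. length xs = Suc k \<and> set xs \<subseteq> A}" by auto
  next
    fix xs assume xs: "xs \<in> {xs. length xs = Suc k \<and> set xs \<subseteq> A}"
    then have ne: "xs \<noteq> []" by auto
    have "xs = ?g (butlast xs, last xs)" using ne by simp
    moreover have "(butlast xs, last xs) \<in> ?L \<times> A" using xs ne
      by (auto dest: in_set_butlastD) 
    ultimately show "xs \<in> ?g ` (?L \<times> A)" by blast
  qed
  finally show ?thesis by simp
qed

lemma sum_lists_0: "(\<Sum>xs\<in>{xs. length xs = 0 \<and> set xs \<subseteq> A}. f xs) = f []"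
proof -
  have "{xs. length xs = 0 \<and> set xs \<subseteq> A} = {[]}" by auto
  then show ?thesis by simp
qed

lemma tw_snoc:
  assumes "length ss = t+2" "length as = t+1"
  shows "traj_weight \<pi> \<mu> Pk (Suc t) (ss@[s']) (as@[a])
       = traj_weight \<pi> \<mu> Pk t ss as * (\<mu> (ss!Suc t) a * Pk (ss!Suc t) a s')"
proof -
  have "(\<Prod>k<Suc t+1. \<mu> ((ss@[s']) ! k) ((as@[a]) ! k) * Pk ((ss@[s']) ! k) ((as@[a]) ! k) ((ss@[s']) ! (k+1)))
      = (\<Prod>k<t+1. \<mu> ((ss@[s']) ! k) ((as@[a]) ! k) * Pk ((ss@[s']) ! k) ((as@[a]) ! k) ((ss@[s']) ! (k+1)))
        * (\<mu> (ss!Suc t) a * Pk (ss!Suc t) a s')"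
    using assms by (simp add: nth_append)
  also have "(\<Prod>k<t+1. \<mu> ((ss@[s']) ! k) ((as@[a]) ! k) * Pk ((ss@[s']) ! k) ((as@[a]) ! k) ((ss@[s']) ! (k+1)))
      = (\<Prod>k<t+1. \<mu> (ss ! k) (as ! k) * Pk (ss ! k) (as ! k) (ss ! (k+1)))"
    using assms by (intro prod.cong) (auto simp: nth_append)
  finally show ?thesis using assms unfolding traj_weight_def by (simp add: nth_append mult_ac)
qed

locale mc =
  fixes n na :: nat and \<pi> :: "nat \<Rightarrow> real" and \<mu> :: "nat \<Rightarrow> nat \<Rightarrow> real"
    and Pk :: "nat \<Rightarrow> nat \<Rightarrow> nat \<Rightarrow> real"
  assumes stoch: "stoch_policy n na \<mu>" and kern: "trans_kernel n na Pk"
    and stat: "stationary_dist n (induced_P na \<mu> Pk) \<pi>"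
begin

abbreviation "EE \<equiv> traj_expect n na \<pi> \<mu> Pk"
abbreviation "PP \<equiv> induced_P na \<mu> Pk"
abbreviation "ww \<equiv> traj_weight \<pi> \<mu> Pk"

lemma EE_alt: "EE t f = (\<Sum>ss\<in>{ss. length ss = Suc (Suc t) \<and> set ss \<subseteq> {..<n}}.
     \<Sum>as\<in>{as. length as = Suc t \<and> set as \<subseteq> {..<na}}. ww t ss as * f ss as)"
  unfolding traj_expect_def by (simp add: sum.cartesian_product)

lemma EE_Suc: "EE (Suc t) f = EE t (\<lambda>ss as. \<Sum>a<na. \<Sum>s'<n.
     \<mu> (ss!Suc t) a * Pk (ss!Suc t) a s' * f (ss@[s']) (as@[a]))"
proof -
  let ?S = "{ss. length ss = Suc (Suc t) \<and> set ss \<subseteq> {..<n}}"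
  let ?A = "{as. length as = Suc t \<and> set as \<subseteq> {..<na}}"
  have "EE (Suc t) f = (\<Sum>ss\<in>?S. \<Sum>s'<n. \<Sum>as\<in>?A. \<Sum>a<na.
       ww (Suc t) (ss@[s']) (as@[a]) * f (ss@[s']) (as@[a]))"
    unfolding EE_alt by (simp only: sum_lists_snoc[OF finite_lessThan])
  also have "\<dots> = (\<Sum>ss\<in>?S. \<Sum>s'<n. \<Sum>as\<in>?A. \<Sum>a<na.
       ww t ss as * (\<mu> (ss!Suc t) a * Pk (ss!Suc t) a s' * f (ss@[s']) (as@[a])))"
    by (intro sum.cong refl) (simp add: tw_snoc mult.assoc)
  also have "\<dots> = (\<Sum>ss\<in>?S. \<Sum>as\<in>?A. \<Sum>a<na. \<Sum>s'<n.
       ww t ss as * (\<mu> (ss!Suc t) a * Pk (ss!Suc t) a s' * f (ss@[s']) (as@[a])))"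
    apply (rule sum.cong[OF refl])
    apply (rule trans[OF sum.swap])
    apply (rule sum.cong[OF refl])
    by (rule sum.swap)
  also have "\<dots> = EE t (\<lambda>ss as. \<Sum>a<na. \<Sum>s'<n.
     \<mu> (ss!Suc t) a * Pk (ss!Suc t) a s' * f (ss@[s']) (as@[a]))"
    unfolding EE_alt by (simp add: sum_distrib_left)
  finally show ?thesis .
qed

lemma mu_nn: "s < n \<Longrightarrow> a < na \<Longrightarrow> \<mu> s a \<ge> 0"
  using stoch unfolding stoch_policy_def by auto
lemma mu_sum: "s < n \<Longrightarrow> (\<Sum>a<na. \<mu> s a) = 1"
  using stoch unfolding stoch_policy_def by auto
lemma Pk_nn: "s < n \<Longrightarrow> a < na \<Longrightarrow> s' < n \<Longrightarrow> Pk s a s' \<ge> 0"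
  using kern unfolding trans_kernel_def by auto
lemma Pk_sum: "s < n \<Longrightarrow> a < na \<Longrightarrow> (\<Sum>s'<n. Pk s a s') = 1"
  using kern unfolding trans_kernel_def by auto
lemma pi_nn: "j < n \<Longrightarrow> \<pi> j \<ge> 0"
  using stat unfolding stationary_dist_def by auto
lemma pi_sum: "(\<Sum>j<n. \<pi> j) = 1"
  using stat unfolding stationary_dist_def by auto
lemma pi_stat: "j < n \<Longrightarrow> (\<Sum>i<n. \<pi> i * PP i j) = \<pi> j"
  using stat unfolding stationary_dist_def by auto

lemma step_sum: "s < n \<Longrightarrow> (\<Sum>a<na. \<Sum>s'<n. \<mu> s a * Pk s a s') = 1"
  by (simp add: sum_distrib_left[symmetric] Pk_sum mu_sum)

lemma step_sum_g: "(\<Sum>a<na. \<Sum>s'<n. \<mu> s a * Pk s a s' * g s') = (\<Sum>s'<n. PP s s' * g s')"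
  unfolding induced_P_def by (simp add: sum_distrib_right sum.swap[of _ "{..<na}"])

lemma PP_nn: "i < n \<Longrightarrow> j < n \<Longrightarrow> PP i j \<ge> 0"
  unfolding induced_P_def by (auto intro!: sum_nonneg mult_nonneg_nonneg mu_nn Pk_nn)

lemma PP_sum: "i < n \<Longrightarrow> (\<Sum>j<n. PP i j) = 1"
  using step_sum_g[of i "\<lambda>_. 1"] step_sum[of i] by simp

lemma Ppow_nn: "j < n \<Longrightarrow> Ppow n PP k i j \<ge> 0"
  by (induction k arbitrary: j) (auto intro!: sum_nonneg mult_nonneg_nonneg PP_nn)

lemma Ppow_sum: "i < n \<Longrightarrow> (\<Sum>j<n. Ppow n PP k i j) = 1"
proof (induction k)
  case 0 then show ?case by simp
next
  case (Suc k)
  have "(\<Sum>j<n. Ppow n PP (Suc k) i j) = (\<Sum>j<n. \<Sum>u<n. Ppow n PP k i u * PP u j)" by simp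
  also have "\<dots> = (\<Sum>u<n. \<Sum>j<n. Ppow n PP k i u * PP u j)" by (rule sum.swap)
  also have "\<dots> = (\<Sum>u<n. Ppow n PP k i u * (\<Sum>j<n. PP u j))" by (simp add: sum_distrib_left)
  also have "\<dots> = (\<Sum>u<n. Ppow n PP k i u)" by (simp add: PP_sum)
  finally show ?case using Suc by simp
qed

lemma delta_sum1: "i < n \<Longrightarrow> (\<Sum>u<n. (if i = u then 1 else 0) * (g u::real)) = g i"
proof -
  assume i: "i < n"
  have "(\<Sum>u<n. (if i = u then 1 else 0) * g u) = (\<Sum>u<n. if u = i then g u else 0)" by (rule sum.cong) auto
  also have "\<dots> = g i" using i by (simp add: sum.delta')
  finally show ?thesis .
qed

lemma delta_sum2: "j < n \<Longrightarrow> (\<Sum>u<n. (g u::real) * (if u = j then 1 else 0)) = g j"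
proof -
  assume i: "j < n"
  have "(\<Sum>u<n. g u * (if u = j then 1 else 0)) = (\<Sum>u<n. if u = j then g u else 0)" by (rule sum.cong) auto
  also have "\<dots> = g j" using i by (simp add: sum.delta')
  finally show ?thesis .
qed

lemma Ppow_left: "i < n \<Longrightarrow> j < n \<Longrightarrow> Ppow n PP (Suc k) i j = (\<Sum>u<n. PP i u * Ppow n PP k u j)"
proof (induction k arbitrary: j)
  case 0
  have "Ppow n PP (Suc 0) i j = PP i j" using 0 by (simp add: delta_sum1)
  also have "\<dots> = (\<Sum>u<n. PP i u * Ppow n PP 0 u j)" using 0 by (simp add: delta_sum2)
  finally show ?case .
next
  case (Suc k)
  have "Ppow n PP (Suc (Suc k)) i j = (\<Sum>v<n. Ppow n PP (Suc k) i v * PP v j)" by simp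
  also have "\<dots> = (\<Sum>v<n. (\<Sum>u<n. PP i u * Ppow n PP k u v) * PP v j)"
    using Suc by (intro sum.cong refl) auto
  also have "\<dots> = (\<Sum>v<n. \<Sum>u<n. PP i u * (Ppow n PP k u v * PP v j))"
    by (simp add: sum_distrib_right mult.assoc)
  also have "\<dots> = (\<Sum>u<n. \<Sum>v<n. PP i u * (Ppow n PP k u v * PP v j))" by (rule sum.swap)
  also have "\<dots> = (\<Sum>u<n. PP i u * (\<Sum>v<n. Ppow n PP k u v * PP v j))"
    by (simp add: sum_distrib_left)
  finally show ?case by simp
qed

lemma pi_Ppow: "j < n \<Longrightarrow> (\<Sum>i<n. \<pi> i * Ppow n PP k i j) = \<pi> j"
proof (induction k arbitrary: j)
  case 0 then show ?case by (simp add: delta_sum2)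
next
  case (Suc k)
  have "(\<Sum>i<n. \<pi> i * Ppow n PP (Suc k) i j) = (\<Sum>i<n. \<Sum>u<n. \<pi> i * Ppow n PP k i u * PP u j)"
    by (simp add: sum_distrib_left mult.assoc)
  also have "\<dots> = (\<Sum>u<n. \<Sum>i<n. \<pi> i * Ppow n PP k i u * PP u j)" by (rule sum.swap)
  also have "\<dots> = (\<Sum>u<n. (\<Sum>i<n. \<pi> i * Ppow n PP k i u) * PP u j)"
    by (simp add: sum_distrib_right)
  also have "\<dots> = (\<Sum>u<n. \<pi> u * PP u j)" using Suc by (intro sum.cong refl) auto
  finally show ?case using pi_stat Suc by simp
qed

lemma EE_cong:
  assumes "\<And>ss as. length ss = Suc (Suc t) \<Longrightarrow> set ss \<subseteq> {..<n} \<Longrightarrow> length as = Suc t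
     \<Longrightarrow> set as \<subseteq> {..<na} \<Longrightarrow> f ss as = g ss as"
  shows "EE t f = EE t g"
  unfolding EE_alt using assms by (intro sum.cong refl) auto

lemma EE_sum: "EE t (\<lambda>ss as. \<Sum>i\<in>I. f i ss as) = (\<Sum>i\<in>I. EE t (f i))"
  unfolding traj_expect_def by (simp add: sum_distrib_left case_prod_beta sum.swap[of _ I])

lemma EE_cmult: "EE t (\<lambda>ss as. c * f ss as) = c * EE t f"
  unfolding traj_expect_def by (simp add: sum_distrib_left case_prod_beta mult_ac)

lemma ww_nn:
  assumes "length ss = Suc (Suc t)" "set ss \<subseteq> {..<n}" "length as = Suc t" "set as \<subseteq> {..<na}"
  shows "ww t ss as \<ge> 0"
proof -
  have "ss ! k < n" if "k < Suc (Suc t)" for k using that assms by (metis lessThan_iff nth_mem subsetD)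
  moreover have "as ! k < na" if "k < Suc t" for k using that assms by (metis lessThan_iff nth_mem subsetD)
  ultimately show ?thesis unfolding traj_weight_def
    by (auto intro!: mult_nonneg_nonneg prod_nonneg pi_nn mu_nn Pk_nn)
qed

lemma EE_tail:
  fixes F :: "nat list \<Rightarrow> nat list \<Rightarrow> real"
  assumes "\<And>ss as s' a. Suc (Suc k) \<le> length ss \<Longrightarrow> Suc k \<le> length as \<Longrightarrow> F (ss@[s']) (as@[a]) = F ss as"
  shows "EE (k + d) F = EE k F"
proof (induction d)
  case 0 then show ?case by simp
next
  case (Suc d)
  have "EE (k + Suc d) F = EE (k + d) (\<lambda>ss as. \<Sum>a<na. \<Sum>s'<n.
     \<mu> (ss!Suc (k+d)) a * Pk (ss!Suc (k+d)) a s' * F (ss@[s']) (as@[a]))"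
    using EE_Suc by simp
  also have "\<dots> = EE (k + d) F"
  proof (rule EE_cong)
    fix ss as :: "nat list" assume h: "length ss = Suc (Suc (k+d))" "set ss \<subseteq> {..<n}" "length as = Suc (k+d)"
    then have "ss ! Suc (k+d) < n" by (metis lessI nth_mem subsetD lessThan_iff)
    then show "(\<Sum>a<na. \<Sum>s'<n. \<mu> (ss!Suc (k+d)) a * Pk (ss!Suc (k+d)) a s' * F (ss@[s']) (as@[a])) = F ss as"
      using h assms by (simp add: sum_distrib_right[symmetric] step_sum)
  qed
  finally show ?case using Suc by simp
qed

lemma EE_0: "EE 0 f = (\<Sum>x<n. \<Sum>y<n. \<Sum>a<na. \<pi> x * (\<mu> x a * Pk x a y) * f [x,y] [a])"
  unfolding EE_alt
  by (simp only: sum_lists_snoc[OF finite_lessThan] sum_lists_0) (simp add: traj_weight_def sum_distrib_left sum_distrib_right)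

lemma EE_one: "EE t (\<lambda>_ _. 1) = 1"
proof -
  have "EE t (\<lambda>_ _. 1) = EE 0 (\<lambda>_ _. 1)"
    using EE_tail[of 0 "\<lambda>_ _. 1" t] by simp
  also have "\<dots> = (\<Sum>x<n. \<pi> x * (\<Sum>a<na. \<Sum>y<n. \<mu> x a * Pk x a y))"
    unfolding EE_0 by (simp add: sum_distrib_left sum.swap[of _ "{..<n}" "{..<na}"])
  also have "\<dots> = 1" by (simp add: step_sum pi_sum)
  finally show ?thesis .
qed

lemma EE_abs_bound:
  assumes "\<And>ss as. length ss = Suc (Suc t) \<Longrightarrow> set ss \<subseteq> {..<n} \<Longrightarrow> length as = Suc t
     \<Longrightarrow> set as \<subseteq> {..<na} \<Longrightarrow> \<bar>f ss as\<bar> \<le> B"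
  shows "\<bar>EE t f\<bar> \<le> B"
proof -
  let ?S = "{ss. length ss = Suc (Suc t) \<and> set ss \<subseteq> {..<n}}"
  let ?A = "{as. length as = Suc t \<and> set as \<subseteq> {..<na}}"
  have "\<bar>EE t f\<bar> \<le> (\<Sum>ss\<in>?S. \<Sum>as\<in>?A. \<bar>ww t ss as * f ss as\<bar>)"
    unfolding EE_alt by (rule order_trans[OF sum_abs]) (intro sum_mono sum_abs)
  also have "\<dots> \<le> (\<Sum>ss\<in>?S. \<Sum>as\<in>?A. ww t ss as * B)"
    using assms ww_nn by (intro sum_mono) (auto simp: abs_mult intro!: mult_left_mono)
  also have "\<dots> = B * EE t (\<lambda>_ _. 1)"
    unfolding EE_alt by (simp add: sum_distrib_left sum_distrib_right mult_ac)
  finally show ?thesis using EE_one by simp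
qed

end


locale mcr = mc +
  fixes r :: "nat \<Rightarrow> nat \<Rightarrow> nat \<Rightarrow> real" and rmax :: real
  assumes rb: "\<And>s a s'. s < n \<Longrightarrow> a < na \<Longrightarrow> s' < n \<Longrightarrow> \<bar>r s a s'\<bar> \<le> rmax"
    and rmax_nn: "rmax \<ge> 0"
begin

definition "RR s = exp_reward n na \<mu> Pk r s"
definition "cc = (\<Sum>s<n. \<pi> s * RR s)"
definition "XX j ss as = r (ss!j) (as!j) (ss!(j+1)) - cc"
definition "GG d s = (\<Sum>s'<n. Ppow n PP d s s' * (RR s' - cc))"

lemma RR_alt: "RR s = (\<Sum>a<na. \<Sum>s'<n. \<mu> s a * Pk s a s' * r s a s')"
  unfolding RR_def exp_reward_def by (rule sum.swap)

lemma RR_bound: "s < n \<Longrightarrow> \<bar>RR s\<bar> \<le> rmax"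
proof -
  assume s: "s < n"
  have "\<bar>RR s\<bar> \<le> (\<Sum>a<na. \<Sum>s'<n. \<bar>\<mu> s a * Pk s a s' * r s a s'\<bar>)"
    unfolding RR_alt by (rule order_trans[OF sum_abs]) (intro sum_mono sum_abs)
  also have "\<dots> \<le> (\<Sum>a<na. \<Sum>s'<n. \<mu> s a * Pk s a s' * rmax)"
    using s by (intro sum_mono) (auto simp: abs_mult mu_nn Pk_nn intro!: mult_left_mono rb mult_nonneg_nonneg)
  also have "\<dots> = rmax * (\<Sum>a<na. \<Sum>s'<n. \<mu> s a * Pk s a s')"
    by (simp add: sum_distrib_left mult_ac)
  finally show ?thesis using s step_sum by simp
qed

lemma cc_bound: "\<bar>cc\<bar> \<le> rmax"
proof -
  have "\<bar>cc\<bar> \<le> (\<Sum>s<n. \<bar>\<pi> s * RR s\<bar>)" unfolding cc_def by (rule sum_abs)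
  also have "\<dots> \<le> (\<Sum>s<n. \<pi> s * rmax)"
    by (intro sum_mono) (auto simp: abs_mult pi_nn intro!: mult_left_mono RR_bound)
  also have "\<dots> = rmax" by (simp add: sum_distrib_right[symmetric] pi_sum)
  finally show ?thesis .
qed

lemma rstep: "s < n \<Longrightarrow> (\<Sum>a<na. \<Sum>s'<n. \<mu> s a * Pk s a s' * (r s a s' - cc)) = RR s - cc"
  unfolding RR_alt using step_sum[of s]
  by (simp add: right_diff_distrib sum_subtractf sum_distrib_right[symmetric])

lemma GG0: "s < n \<Longrightarrow> GG 0 s = RR s - cc"
  unfolding GG_def by (simp add: delta_sum1)

lemma GG_Suc: "s < n \<Longrightarrow> (\<Sum>s'<n. PP s s' * GG d s') = GG (Suc d) s"
proof -
  assume s: "s < n"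
  have "GG (Suc d) s = (\<Sum>v<n. (\<Sum>u<n. PP s u * Ppow n PP d u v) * (RR v - cc))"
    unfolding GG_def using s by (intro sum.cong refl) (simp del: Ppow.simps add: Ppow_left)
  also have "\<dots> = (\<Sum>v<n. \<Sum>u<n. PP s u * (Ppow n PP d u v * (RR v - cc)))"
    by (simp add: sum_distrib_right mult.assoc)
  also have "\<dots> = (\<Sum>u<n. \<Sum>v<n. PP s u * (Ppow n PP d u v * (RR v - cc)))" by (rule sum.swap)
  also have "\<dots> = (\<Sum>s'<n. PP s s' * GG d s')"
    unfolding GG_def by (simp add: sum_distrib_left)
  finally show ?thesis by simp
qed

lemma GG_bound1: "s < n \<Longrightarrow> \<bar>GG d s\<bar> \<le> 2 * rmax"
proof -
  assume s: "s < n"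
  have "\<bar>GG d s\<bar> \<le> (\<Sum>s'<n. \<bar>Ppow n PP d s s' * (RR s' - cc)\<bar>)" unfolding GG_def by (rule sum_abs)
  also have "\<dots> \<le> (\<Sum>s'<n. Ppow n PP d s s' * (2 * rmax))"
  proof (intro sum_mono)
    fix s' assume "s' \<in> {..<n}"
    then have "\<bar>RR s' - cc\<bar> \<le> 2 * rmax" using RR_bound[of s'] cc_bound by auto
    then show "\<bar>Ppow n PP d s s' * (RR s' - cc)\<bar> \<le> Ppow n PP d s s' * (2 * rmax)"
      using Ppow_nn \<open>s' \<in> {..<n}\<close> by (auto simp: abs_mult intro!: mult_left_mono)
  qed
  also have "\<dots> = 2 * rmax" using s by (simp add: sum_distrib_right[symmetric] Ppow_sum)
  finally show ?thesis .
qed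

lemma GG_bound2:
  assumes s: "s < n" and tv: "tv_dist n (Ppow n PP d s) \<pi> \<le> M"
  shows "\<bar>GG d s\<bar> \<le> 2 * rmax * M"
proof -
  have "GG d s = (\<Sum>s'<n. Ppow n PP d s s' * RR s') - cc * (\<Sum>s'<n. Ppow n PP d s s')"
    unfolding GG_def by (simp add: right_diff_distrib sum_subtractf sum_distrib_left mult_ac)
  also have "\<dots> = (\<Sum>s'<n. (Ppow n PP d s s' - \<pi> s') * RR s')"
    using s by (simp add: Ppow_sum cc_def left_diff_distrib sum_subtractf)
  finally have eq: "GG d s = (\<Sum>s'<n. (Ppow n PP d s s' - \<pi> s') * RR s')" .
  have "\<bar>GG d s\<bar> \<le> (\<Sum>s'<n. \<bar>(Ppow n PP d s s' - \<pi> s') * RR s'\<bar>)" unfolding eq by (rule sum_abs)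
  also have "\<dots> \<le> (\<Sum>s'<n. \<bar>Ppow n PP d s s' - \<pi> s'\<bar> * rmax)"
    by (intro sum_mono) (auto simp: abs_mult intro!: mult_left_mono RR_bound)
  also have "\<dots> = rmax * (2 * tv_dist n (Ppow n PP d s) \<pi>)"
    unfolding tv_dist_def by (simp add: sum_distrib_left mult_ac)
  also have "\<dots> \<le> rmax * (2 * M)" using tv rmax_nn by (intro mult_left_mono) auto
  finally show ?thesis by simp
qed

lemma XX_snoc: "Suc j < length ss \<Longrightarrow> j < length as \<Longrightarrow> XX j (ss@[s']) (as@[a]) = XX j ss as"
  unfolding XX_def by (simp add: nth_append)

lemma XX_bound:
  assumes "j < length as" "length ss = Suc (length as)" "set ss \<subseteq> {..<n}" "set as \<subseteq> {..<na}"
  shows "\<bar>XX j ss as\<bar> \<le> 2 * rmax"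
proof -
  have "ss ! j < n" "ss ! Suc j < n" "as ! j < na" using assms by (metis Suc_mono lessThan_iff less_SucI nth_mem subsetD)+
  from this(1,3,2) have "\<bar>r (ss!j) (as!j) (ss!Suc j)\<bar> \<le> rmax" by (rule rb)
  then show ?thesis unfolding XX_def using cc_bound by auto
qed

lemma chain: "EE (j+e) (\<lambda>ss as. XX j ss as * GG d (ss!(j+e+1)))
            = EE j (\<lambda>ss as. XX j ss as * GG (d+e) (ss!(j+1)))"
proof (induction e arbitrary: d)
  case 0 then show ?case by simp
next
  case (Suc e)
  have "EE (j + Suc e) (\<lambda>ss as. XX j ss as * GG d (ss!(j+Suc e+1)))
      = EE (Suc (j + e)) (\<lambda>ss as. XX j ss as * GG d (ss!(j+Suc e+1)))" by simp
  also have "\<dots> = EE (j+e) (\<lambda>ss as. XX j ss as * GG (Suc d) (ss!(j+e+1)))"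
    unfolding EE_Suc
  proof (rule EE_cong)
    fix ss as :: "nat list"
    assume h: "length ss = Suc (Suc (j+e))" "set ss \<subseteq> {..<n}" "length as = Suc (j+e)"
    then have sl: "ss ! Suc (j+e) < n" by (metis lessI nth_mem subsetD lessThan_iff)
    have "(\<Sum>a<na. \<Sum>s'<n. \<mu> (ss!Suc (j+e)) a * Pk (ss!Suc (j+e)) a s' *
             (XX j (ss@[s']) (as@[a]) * GG d ((ss@[s'])!(j+Suc e+1))))
        = (\<Sum>a<na. \<Sum>s'<n. XX j ss as * (\<mu> (ss!Suc (j+e)) a * Pk (ss!Suc (j+e)) a s' * GG d s'))"
      using h by (intro sum.cong refl) (simp add: XX_snoc nth_append)
    also have "\<dots> = XX j ss as * (\<Sum>s'<n. PP (ss!Suc (j+e)) s' * GG d s')"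
      by (simp add: sum_distrib_left[symmetric] step_sum_g)
    also have "\<dots> = XX j ss as * GG (Suc d) (ss!(j+e+1))" using sl GG_Suc by simp
    finally show "(\<Sum>a<na. \<Sum>s'<n. \<mu> (ss!Suc (j+e)) a * Pk (ss!Suc (j+e)) a s' *
             (XX j (ss@[s']) (as@[a]) * GG d ((ss@[s'])!(j+Suc e+1))))
        = XX j ss as * GG (Suc d) (ss!(j+e+1))" .
  qed
  also have "\<dots> = EE j (\<lambda>ss as. XX j ss as * GG (d + Suc e) (ss!(j+1)))"
    using Suc[of "Suc d"] by simp
  finally show ?case .
qed

lemma first: "EE (Suc (j+e)) (\<lambda>ss as. XX j ss as * XX (Suc (j+e)) ss as)
            = EE (j+e) (\<lambda>ss as. XX j ss as * GG 0 (ss!(j+e+1)))"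
  unfolding EE_Suc
proof (rule EE_cong)
  fix ss as :: "nat list"
  assume h: "length ss = Suc (Suc (j+e))" "set ss \<subseteq> {..<n}" "length as = Suc (j+e)"
  then have sl: "ss ! Suc (j+e) < n" by (metis lessI nth_mem subsetD lessThan_iff)
  have "(\<Sum>a<na. \<Sum>s'<n. \<mu> (ss!Suc (j+e)) a * Pk (ss!Suc (j+e)) a s' *
           (XX j (ss@[s']) (as@[a]) * XX (Suc (j+e)) (ss@[s']) (as@[a])))
      = (\<Sum>a<na. \<Sum>s'<n. XX j ss as * (\<mu> (ss!Suc (j+e)) a * Pk (ss!Suc (j+e)) a s' *
            (r (ss!Suc (j+e)) a s' - cc)))"
    using h by (intro sum.cong refl) (simp add: XX_snoc nth_append XX_def[of "Suc (j+e)"])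
  also have "\<dots> = XX j ss as * (RR (ss!Suc (j+e)) - cc)"
    using sl by (simp add: sum_distrib_left[symmetric] rstep)
  also have "\<dots> = XX j ss as * GG 0 (ss!(j+e+1))" using sl GG0 by simp
  finally show "(\<Sum>a<na. \<Sum>s'<n. \<mu> (ss!Suc (j+e)) a * Pk (ss!Suc (j+e)) a s' *
           (XX j (ss@[s']) (as@[a]) * XX (Suc (j+e)) (ss@[s']) (as@[a])))
      = XX j ss as * GG 0 (ss!(j+e+1))" .
qed

lemma cov_eq:
  assumes "j < k" "k \<le> t"
  shows "EE t (\<lambda>ss as. XX j ss as * XX k ss as) = EE j (\<lambda>ss as. XX j ss as * GG (k - j - 1) (ss!(j+1)))"
proof -
  obtain e where k: "k = Suc (j + e)" using assms by (metis add_Suc_right less_iff_Suc_add)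
  obtain d where t: "t = k + d" using assms by (metis le_add_diff_inverse)
  have "EE t (\<lambda>ss as. XX j ss as * XX k ss as) = EE k (\<lambda>ss as. XX j ss as * XX k ss as)"
    unfolding t using assms by (intro EE_tail) (simp add: XX_snoc)
  also have "\<dots> = EE (j+e) (\<lambda>ss as. XX j ss as * GG 0 (ss!(j+e+1)))" unfolding k by (rule first)
  also have "\<dots> = EE j (\<lambda>ss as. XX j ss as * GG (0+e) (ss!(j+1)))" by (rule chain)
  finally show ?thesis using k by simp
qed

lemma cov_bound:
  assumes "j < k" "k \<le> t" "\<And>s. s < n \<Longrightarrow> \<bar>GG (k - j - 1) s\<bar> \<le> B"
  shows "\<bar>EE t (\<lambda>ss as. XX j ss as * XX k ss as)\<bar> \<le> 2 * rmax * B"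
  unfolding cov_eq[OF assms(1,2)]
proof (rule EE_abs_bound)
  fix ss as :: "nat list"
  assume h: "length ss = Suc (Suc j)" "set ss \<subseteq> {..<n}" "length as = Suc j" "set as \<subseteq> {..<na}"
  then have "ss ! (j+1) < n" by (metis Suc_eq_plus1 lessI nth_mem subsetD lessThan_iff)
  then have g: "\<bar>GG (k - j - 1) (ss!(j+1))\<bar> \<le> B" by (rule assms(3))
  have x: "\<bar>XX j ss as\<bar> \<le> 2 * rmax" using h by (intro XX_bound) auto
  show "\<bar>XX j ss as * GG (k - j - 1) (ss!(j+1))\<bar> \<le> 2 * rmax * B"
    unfolding abs_mult using x g by (intro mult_mono) auto
qed

end


lemma tau_props:
  assumes "m > 0" "0 < \<rho>" "\<rho> < 1" "\<epsilon> > 0"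
  shows "tau_mix m \<rho> \<epsilon> \<ge> 1 \<and> m * \<rho> ^ tau_mix m \<rho> \<epsilon> \<le> \<epsilon>"
proof -
  obtain N where N: "\<rho> ^ N < \<epsilon> / m" using real_arch_pow_inv[of "\<epsilon>/m" \<rho>] assms by auto
  have a: "m * \<rho> ^ N < \<epsilon>" using N assms by (simp add: field_simps)
  have "m * \<rho> ^ Suc N \<le> m * \<rho> ^ N" using assms by (intro mult_left_mono power_decreasing) auto
  then have "m * \<rho> ^ Suc N \<le> \<epsilon>" using a by linarith
  then have ex: "\<exists>t::nat. t \<ge> 1 \<and> m * \<rho> ^ t \<le> \<epsilon>" by (intro exI[of _ "Suc N"]) auto
  show ?thesis unfolding tau_mix_def by (rule LeastI_ex[OF ex])
qed

context mcr
begin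

lemma Ppow_RR_bound: "s < n \<Longrightarrow> \<bar>\<Sum>s'<n. Ppow n PP k s s' * RR s'\<bar> \<le> rmax"
proof -
  assume s: "s < n"
  have "\<bar>\<Sum>s'<n. Ppow n PP k s s' * RR s'\<bar> \<le> (\<Sum>s'<n. \<bar>Ppow n PP k s s' * RR s'\<bar>)" by (rule sum_abs)
  also have "\<dots> \<le> (\<Sum>s'<n. Ppow n PP k s s' * rmax)"
    by (intro sum_mono) (auto simp: abs_mult Ppow_nn intro!: mult_left_mono RR_bound)
  also have "\<dots> = rmax" using s by (simp add: sum_distrib_right[symmetric] Ppow_sum)
  finally show ?thesis .
qed

lemma Vbar:
  assumes g: "0 < \<gamma>" "\<gamma> < (1::real)"
  shows "(\<Sum>s<n. \<pi> s * value_fn n na \<mu> Pk r \<gamma> s) = cc / (1 - \<gamma>)"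
proof -
  define A where "A k s = (\<Sum>s'<n. Ppow n PP k s s' * RR s')" for k s
  have vf: "value_fn n na \<mu> Pk r \<gamma> s = (\<Sum>k. \<gamma> ^ k * A k s)" for s
    unfolding value_fn_def A_def RR_def ..
  have summ: "summable (\<lambda>k. \<gamma> ^ k * A k s)" if s: "s < n" for s
  proof (rule summable_comparison_test')
    show "summable (\<lambda>k. rmax * \<gamma> ^ k)" using g by (intro summable_mult summable_geometric) auto
    fix k :: nat
    have "\<bar>A k s\<bar> \<le> rmax" unfolding A_def using s by (rule Ppow_RR_bound)
    then show "norm (\<gamma> ^ k * A k s) \<le> rmax * \<gamma> ^ k" using g
      by (simp add: abs_mult mult.commute mult_left_mono)
  qed
  have "(\<Sum>s<n. \<pi> s * value_fn n na \<mu> Pk r \<gamma> s) = (\<Sum>s<n. \<Sum>k. \<pi> s * (\<gamma> ^ k * A k s))"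
    unfolding vf using summ by (intro sum.cong refl) (simp add: suminf_mult)
  also have "\<dots> = (\<Sum>k. \<Sum>s<n. \<pi> s * (\<gamma> ^ k * A k s))"
    using summ by (intro suminf_sum[symmetric] summable_mult) auto
  also have "\<dots> = (\<Sum>k. cc * \<gamma> ^ k)"
  proof (rule arg_cong[where f = suminf], rule ext)
    fix k
    have "(\<Sum>s<n. \<pi> s * (\<gamma> ^ k * A k s)) = \<gamma> ^ k * (\<Sum>s<n. \<Sum>s'<n. \<pi> s * Ppow n PP k s s' * RR s')"
      unfolding A_def by (simp add: sum_distrib_left mult_ac)
    also have "(\<Sum>s<n. \<Sum>s'<n. \<pi> s * Ppow n PP k s s' * RR s') = (\<Sum>s'<n. \<Sum>s<n. \<pi> s * Ppow n PP k s s' * RR s')"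
      by (rule sum.swap)
    also have "\<dots> = (\<Sum>s'<n. (\<Sum>s<n. \<pi> s * Ppow n PP k s s') * RR s')"
      by (simp add: sum_distrib_right)
    also have "\<dots> = cc" unfolding cc_def by (intro sum.cong refl) (simp add: pi_Ppow)
    finally show "(\<Sum>s<n. \<pi> s * (\<gamma> ^ k * A k s)) = cc * \<gamma> ^ k" by simp
  qed
  also have "\<dots> = cc * (1 / (1 - \<gamma>))"
    using g by (simp add: suminf_mult summable_geometric suminf_geometric)
  finally show ?thesis by simp
qed

lemma EE_XX2: "j \<le> t \<Longrightarrow> k \<le> t \<Longrightarrow> \<bar>EE t (\<lambda>ss as. XX j ss as * XX k ss as)\<bar> \<le> 4 * rmax^2"
proof (rule EE_abs_bound)
  fix ss as :: "nat list"
  assume h: "j \<le> t" "k \<le> t" "length ss = Suc (Suc t)" "set ss \<subseteq> {..<n}" "length as = Suc t" "set as \<subseteq> {..<na}"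
  have x: "\<bar>XX j ss as\<bar> \<le> 2 * rmax" "\<bar>XX k ss as\<bar> \<le> 2 * rmax" using h by (intro XX_bound; simp)+
  have "\<bar>XX j ss as * XX k ss as\<bar> \<le> (2 * rmax) * (2 * rmax)"
    unfolding abs_mult using x by (intro mult_mono) auto
  then show "\<bar>XX j ss as * XX k ss as\<bar> \<le> 4 * rmax^2" by (simp add: power2_eq_square)
qed

lemma pair_bound:
  assumes mix: "\<forall>k. \<forall>s<n. tv_dist n (Ppow n PP k s) \<pi> \<le> m * \<rho> ^ k"
    and mr: "m > 0" "0 < \<rho>" "\<rho> < 1" and tau: "m * \<rho> ^ \<tau> \<le> \<epsilon>"
    and jk: "j \<le> t" "k \<le> t"
  shows "\<bar>EE t (\<lambda>ss as. XX j ss as * XX k ss as)\<bar>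
         \<le> 4 * rmax^2 * (if j \<le> k + \<tau> \<and> k \<le> j + \<tau> then 1 else \<epsilon>)"
proof (cases "j \<le> k + \<tau> \<and> k \<le> j + \<tau>")
  case True then show ?thesis using EE_XX2[OF jk] by simp
next
  case False
  have gen: "\<bar>EE t (\<lambda>ss as. XX j' ss as * XX k' ss as)\<bar> \<le> 4 * rmax^2 * \<epsilon>"
    if jk': "j' < k'" "k' \<le> t" "j' + \<tau> < k'" for j' k'
  proof -
    have "m * \<rho> ^ (k' - j' - 1) \<le> m * \<rho> ^ \<tau>"
      using mr jk' by (intro mult_left_mono power_decreasing) auto
    then have B: "m * \<rho> ^ (k' - j' - 1) \<le> \<epsilon>" using tau by simp
    have "\<bar>GG (k' - j' - 1) s\<bar> \<le> 2 * rmax * \<epsilon>" if "s < n" for s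
    proof -
      have "\<bar>GG (k' - j' - 1) s\<bar> \<le> 2 * rmax * (m * \<rho> ^ (k' - j' - 1))"
        using that mix by (intro GG_bound2) auto
      also have "\<dots> \<le> 2 * rmax * \<epsilon>" using B rmax_nn by (intro mult_left_mono) auto
      finally show ?thesis .
    qed
    then have "\<bar>EE t (\<lambda>ss as. XX j' ss as * XX k' ss as)\<bar> \<le> 2 * rmax * (2 * rmax * \<epsilon>)"
      using jk' by (intro cov_bound) auto
    then show ?thesis by (simp add: power2_eq_square mult_ac)
  qed
  show ?thesis
  proof (cases "j < k")
    case True then show ?thesis using False gen[of j k] jk by auto
  next
    case nl: False
    have "EE t (\<lambda>ss as. XX j ss as * XX k ss as) = EE t (\<lambda>ss as. XX k ss as * XX j ss as)"
      by (simp add: mult.commute)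
    then show ?thesis using False nl gen[of k j] jk by auto
  qed
qed

end


lemma avg_alg:
  fixes x c g T :: real
  assumes "g < 1" "T \<ge> 0"
  shows "(1/(T+1) * x)/(1-g) - c/(1-g) = (x - (T+1)*c)/((T+1)*(1-g))"
proof -
  have a: "T + 1 \<noteq> 0" "1 - g \<noteq> 0" using assms by auto
  have "(x - (T+1)*c)/((T+1)*(1-g)) = ((x - (T+1)*c)/(T+1))/(1-g)" by simp
  also have "(x - (T+1)*c)/(T+1) = 1/(T+1) * x - c" using a by (simp add: diff_divide_distrib)
  finally show ?thesis by (simp add: diff_divide_distrib)
qed

lemma beta_sum:
  fixes t j \<tau> :: nat and \<epsilon> :: real
  assumes "\<epsilon> \<ge> 0"
  shows "(\<Sum>k\<le>t. (if j \<le> k + \<tau> \<and> k \<le> j + \<tau> then 1 else \<epsilon>)) \<le> real (2*\<tau>+1) + (real t + 1) * \<epsilon>"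
proof -
  let ?S = "{j - \<tau>..j + \<tau>}"
  have "(\<Sum>k\<le>t. (if j \<le> k + \<tau> \<and> k \<le> j + \<tau> then 1 else \<epsilon>)) \<le> (\<Sum>k\<le>t. (of_bool (k \<in> ?S) + \<epsilon>))"
    using assms by (intro sum_mono) auto
  also have "\<dots> = real (card ({..t} \<inter> {k. k \<in> ?S})) + (real t + 1) * \<epsilon>"
    by (simp add: sum.distrib)
  also have "card ({..t} \<inter> {k. k \<in> ?S}) \<le> card ?S" by (intro card_mono) auto
  also have "card ?S \<le> 2*\<tau>+1" by simp
  finally show ?thesis by simp
qed

lemma final_arith:
  fixes a D tt tau :: real
  assumes "a \<ge> 0" "D > 0" "tt \<ge> 1" "tau \<ge> 1"
  shows "1 / ((tt+1)^2 * D) * ((tt+1) * (4 * a * (2*tau + 1 + 1/2))) \<le> 16 * (a * tau / (D * tt))"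
proof -
  have e: "(tt+1)^2 * D = (tt+1) * ((tt+1) * D)" by (simp add: power2_eq_square)
  have "1 / ((tt+1)^2 * D) * ((tt+1) * (4 * a * (2*tau + 1 + 1/2)))
      = ((tt+1) * (4 * a * (2*tau + 3/2))) / ((tt+1) * ((tt+1) * D))" unfolding e by simp
  also have "\<dots> = 4 * a * (2*tau + 3/2) / ((tt+1) * D)"
    using assms by (intro mult_divide_mult_cancel_left) auto
  also have "\<dots> \<le> 4 * a * (4 * tau) / ((tt+1) * D)"
    using assms by (intro divide_right_mono mult_left_mono) auto
  also have "\<dots> \<le> 4 * a * (4 * tau) / (tt * D)"
    using assms by (intro divide_left_mono mult_pos_pos mult_right_mono) auto
  also have "\<dots> = 16 * (a * tau / (D * tt))" by (simp add: field_simps)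
  finally show ?thesis .
qed

theorem lemma3:
  shows "\<exists>C::real > 0. \<forall>(n::nat) (na::nat) \<mu> Pk r rmax (\<gamma>::real) \<pi> (m::real) (\<rho>::real) (t::nat).
     n \<ge> 1 \<and> na \<ge> 1 \<and> stoch_policy n na \<mu> \<and> trans_kernel n na Pk
     \<and> irreducible_chain n (induced_P na \<mu> Pk) \<and> aperiodic_chain n (induced_P na \<mu> Pk)
     \<and> stationary_dist n (induced_P na \<mu> Pk) \<pi>
     \<and> (\<forall>s<n. \<forall>a<na. \<forall>s'<n. \<bar>r s a s'\<bar> \<le> rmax)
     \<and> 0 < \<gamma> \<and> \<gamma> < 1
     \<and> m > 0 \<and> 0 < \<rho> \<and> \<rho> < 1
     \<and> (\<forall>k. \<forall>s<n. tv_dist n (Ppow n (induced_P na \<mu> Pk) k s) \<pi> \<le> m * \<rho> ^ k)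
     \<and> t > t0_mix m \<rho>
     \<longrightarrow> traj_expect n na \<pi> \<mu> Pk t
           (\<lambda>ss as. (avg_reward r t ss as / (1 - \<gamma>)
                      - (\<Sum>s<n. \<pi> s * value_fn n na \<mu> Pk r \<gamma> s)) ^ 2)
         \<le> C * (rmax ^ 2 * real (tau_mix m \<rho> (1 / (2 * (real t + 1)))) / ((1 - \<gamma>) ^ 2 * real t))"
proof (intro exI[of _ "16::real"] conjI allI impI)
  show "(16::real) > 0" by simp
next
  fix n na :: nat and \<mu> :: "nat \<Rightarrow> nat \<Rightarrow> real" and Pk r :: "nat \<Rightarrow> nat \<Rightarrow> nat \<Rightarrow> real"
    and rmax \<gamma> :: real and \<pi> :: "nat \<Rightarrow> real" and m \<rho> :: real and t :: nat
  assume H: "n \<ge> 1 \<and> na \<ge> 1 \<and> stoch_policy n na \<mu> \<and> trans_kernel n na Pk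
     \<and> irreducible_chain n (induced_P na \<mu> Pk) \<and> aperiodic_chain n (induced_P na \<mu> Pk)
     \<and> stationary_dist n (induced_P na \<mu> Pk) \<pi>
     \<and> (\<forall>s<n. \<forall>a<na. \<forall>s'<n. \<bar>r s a s'\<bar> \<le> rmax)
     \<and> 0 < \<gamma> \<and> \<gamma> < 1
     \<and> m > 0 \<and> 0 < \<rho> \<and> \<rho> < 1
     \<and> (\<forall>k. \<forall>s<n. tv_dist n (Ppow n (induced_P na \<mu> Pk) k s) \<pi> \<le> m * \<rho> ^ k)
     \<and> t > t0_mix m \<rho>"
  have rmax0: "rmax \<ge> 0" using H by (metis abs_ge_zero order_trans less_one less_le_trans zero_less_one linorder_not_le)
  have I: "mcr n na \<pi> \<mu> Pk r rmax"
    unfolding mcr_def mc_def mcr_axioms_def using H rmax0 by auto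
  interpret M: mcr n na \<pi> \<mu> Pk r rmax by (rule I)
  have g: "0 < \<gamma>" "\<gamma> < 1" and mr: "m > 0" "0 < \<rho>" "\<rho> < 1" and t1: "t \<ge> 1"
    and mix: "\<forall>k. \<forall>s<n. tv_dist n (Ppow n (induced_P na \<mu> Pk) k s) \<pi> \<le> m * \<rho> ^ k"
    using H by auto
  define \<epsilon> where "\<epsilon> = 1 / (2 * (real t + 1))"
  define \<tau> where "\<tau> = tau_mix m \<rho> \<epsilon>"
  have eps: "\<epsilon> > 0" unfolding \<epsilon>_def by simp
  have tau: "\<tau> \<ge> 1" "m * \<rho> ^ \<tau> \<le> \<epsilon>" using tau_props[OF mr eps] unfolding \<tau>_def by auto
  define K where "K = 1 / ((real t + 1)^2 * (1 - \<gamma>)^2)"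
  have Vb: "(\<Sum>s<n. \<pi> s * value_fn n na \<mu> Pk r \<gamma> s) = M.cc / (1 - \<gamma>)" using M.Vbar g by simp
  have fx: "(\<lambda>ss as. (avg_reward r t ss as / (1 - \<gamma>) - (\<Sum>s<n. \<pi> s * value_fn n na \<mu> Pk r \<gamma> s)) ^ 2)
      = (\<lambda>ss as. K * (\<Sum>j\<le>t. \<Sum>k\<le>t. M.XX j ss as * M.XX k ss as))"
  proof (intro ext)
    fix ss as :: "nat list"
    have sX: "(\<Sum>k\<le>t. M.XX k ss as) = (\<Sum>k\<le>t. r (ss!k) (as!k) (ss!(k+1))) - (real t + 1) * M.cc"
      by (simp add: M.XX_def sum_subtractf)
    have "avg_reward r t ss as / (1 - \<gamma>) - M.cc / (1 - \<gamma>) = (\<Sum>k\<le>t. M.XX k ss as) / ((real t + 1) * (1 - \<gamma>))"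
      unfolding avg_reward_def sX using g by (intro avg_alg) auto
    then have "(avg_reward r t ss as / (1 - \<gamma>) - M.cc / (1 - \<gamma>))^2 = K * ((\<Sum>k\<le>t. M.XX k ss as) * (\<Sum>k\<le>t. M.XX k ss as))"
      unfolding K_def by (simp add: power2_eq_square field_simps)
    then show "(avg_reward r t ss as / (1 - \<gamma>) - (\<Sum>s<n. \<pi> s * value_fn n na \<mu> Pk r \<gamma> s)) ^ 2
       = K * (\<Sum>j\<le>t. \<Sum>k\<le>t. M.XX j ss as * M.XX k ss as)"
      unfolding Vb by (simp add: sum_product)
  qed
  have pb: "\<bar>M.EE t (\<lambda>ss as. M.XX j ss as * M.XX k ss as)\<bar>
         \<le> 4 * rmax^2 * (if j \<le> k + \<tau> \<and> k \<le> j + \<tau> then 1 else \<epsilon>)" if "j \<le> t" "k \<le> t" for j k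
    using M.pair_bound[OF mix mr tau(2)] that by blast
  have S: "(\<Sum>j\<le>t. \<Sum>k\<le>t. M.EE t (\<lambda>ss as. M.XX j ss as * M.XX k ss as))
      \<le> (real t + 1) * (4 * rmax^2 * (2 * real \<tau> + 1 + 1/2))"
  proof -
    have "(\<Sum>j\<le>t. \<Sum>k\<le>t. M.EE t (\<lambda>ss as. M.XX j ss as * M.XX k ss as))
        \<le> (\<Sum>j\<le>t. \<Sum>k\<le>t. 4 * rmax^2 * (if j \<le> k + \<tau> \<and> k \<le> j + \<tau> then 1 else \<epsilon>))"
      using pb by (intro sum_mono) (meson abs_le_D1 atMost_iff)
    also have "\<dots> = (\<Sum>j\<le>t. 4 * rmax^2 * (\<Sum>k\<le>t. (if j \<le> k + \<tau> \<and> k \<le> j + \<tau> then 1 else \<epsilon>)))"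
      by (simp add: sum_distrib_left)
    also have "\<dots> \<le> (\<Sum>j\<le>t. 4 * rmax^2 * (real (2*\<tau>+1) + (real t + 1) * \<epsilon>))"
      using eps by (intro sum_mono mult_left_mono beta_sum) auto
    also have "\<dots> = (real t + 1) * (4 * rmax^2 * (2 * real \<tau> + 1 + 1/2))"
    proof -
      have h: "(real t + 1) * \<epsilon> = 1/2" unfolding \<epsilon>_def by simp
      show ?thesis unfolding h by simp
    qed
    finally show ?thesis .
  qed
  have "traj_expect n na \<pi> \<mu> Pk t
           (\<lambda>ss as. (avg_reward r t ss as / (1 - \<gamma>)
                      - (\<Sum>s<n. \<pi> s * value_fn n na \<mu> Pk r \<gamma> s)) ^ 2)
      = K * (\<Sum>j\<le>t. \<Sum>k\<le>t. M.EE t (\<lambda>ss as. M.XX j ss as * M.XX k ss as))"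
    unfolding fx M.EE_cmult M.EE_sum ..
  also have "\<dots> \<le> K * ((real t + 1) * (4 * rmax^2 * (2 * real \<tau> + 1 + 1/2)))"
    using S unfolding K_def by (intro mult_left_mono) auto
  also have "\<dots> \<le> 16 * (rmax ^ 2 * real \<tau> / ((1 - \<gamma>) ^ 2 * real t))"
    unfolding K_def using final_arith[of "rmax^2" "(1-\<gamma>)^2" "real t" "real \<tau>"] g t1 tau
    by (simp add: mult.commute)
  finally show "traj_expect n na \<pi> \<mu> Pk t
           (\<lambda>ss as. (avg_reward r t ss as / (1 - \<gamma>)
                      - (\<Sum>s<n. \<pi> s * value_fn n na \<mu> Pk r \<gamma> s)) ^ 2)
         \<le> 16 * (rmax ^ 2 * real (tau_mix m \<rho> (1 / (2 * (real t + 1)))) / ((1 - \<gamma>) ^ 2 * real t))"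
    unfolding \<tau>_def \<epsilon>_def .
qed


end
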